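(* Assume $T_k$ is nonsingular and let $X_k=V_kT_k^{-1}V_k^*$. Then the Riccati residual $$R_k=C^*C+A^*X_k+X_kA-X_kFX_k$$ satisfies $$R_k=[C^*,V_k]\begin{bmatrix}1\\-T_k^{-1}\mathbf 1\end{bmatrix}\begin{bmatrix}1&-\mathbf 1^*T_k^{-1}\end{bmatrix}[C^*,V_k]^*.$$ In particular, $R_k$ has rank at most one.
   Context: Let $A\in\mathbb C^{n\times n}$, let $C\in\mathbb C^{1\times n}$, and let $F\in\mathbb C^{n\times n}$ be Hermitian; $M^*$ denotes the conjugate transpose. Let $\alpha_1,\dots,\alpha_k\in\mathbb C$ be pairwise distinct with $\operatorname{Re}(\alpha_j)>0$ and $-A^*+\alpha_jI$ nonsingular. Set $$V_k=\big[(-A^*+\alpha_1I)^{-1}C^*,\dots,(-A^*+\alpha_kI)^{-1}C^*\big]\in\mathbb C^{n\times k},$$ $\Lambda_k=\operatorname{diag}(\alpha_1,\dots,\alpha_k)$, $\mathbf 1=[1,\dots,1]^T\in\mathbb R^k$, and let $T_k\in\mathbb C^{k\times k}$ be the matrix with entries $T_k(i,j)=\dfrac{1+(V_k^*FV_k)_{ij}}{\bar\alpha_i+\alpha_j}$, i.e. the unique solution of $\Lambda_k^*T+T\Lambda_k=V_k^*FV_k+\mathbf 1\mathbf 1^*$. *)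

theory Defs
  imports "Jordan_Normal_Form.Schur_Decomposition" "Jordan_Normal_Form.Gauss_Jordan_Elimination"
    "Jordan_Normal_Form.DL_Rank"
begin

definition minv :: "'a :: field mat \<Rightarrow> 'a mat" where
  "minv M = (case mat_inverse M of Some B \<Rightarrow> B | None \<Rightarrow> 0\<^sub>m (dim_row M) (dim_row M))"

end

theory Submission
  imports Defs
begin


lemma adj_carrier[simp]: "A \<in> carrier_mat m n \<Longrightarrow> mat_adjoint A \<in> carrier_mat n m"
  unfolding mat_adjoint_def by auto

lemma adj_dims[simp]: "dim_row (mat_adjoint A) = dim_col A" "dim_col (mat_adjoint A) = dim_row A"
  unfolding mat_adjoint_def by auto

lemma adj_index[simp]: "i < dim_col A \<Longrightarrow> j < dim_row A \<Longrightarrow> mat_adjoint (A::complex mat) $$ (i,j) = cnj (A $$ (j,i))"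
  unfolding mat_adjoint_def by (simp add: mat_of_rows_index)

lemma adj_adj[simp]: "mat_adjoint (mat_adjoint (A::complex mat)) = A"
  by (rule eq_matI) auto

lemma adj_mult: "(A::complex mat) \<in> carrier_mat m n \<Longrightarrow> B \<in> carrier_mat n p \<Longrightarrow> mat_adjoint (A*B) = mat_adjoint B * mat_adjoint A"
  by (rule eq_matI) (auto simp: scalar_prod_def cnj_sum mult.commute)

lemma adj_minus: "(A::complex mat) \<in> carrier_mat m n \<Longrightarrow> B \<in> carrier_mat m n \<Longrightarrow> mat_adjoint (A-B) = mat_adjoint A - mat_adjoint B"
  by (rule eq_matI) auto

lemma minv: assumes "invertible_mat (M::complex mat)" "M \<in> carrier_mat m m"
  shows "M * minv M = 1\<^sub>m m" "minv M * M = 1\<^sub>m m" "minv M \<in> carrier_mat m m"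
proof -
  have "mat_inverse M \<noteq> None"
  proof
    assume "mat_inverse M = None"
    from mat_inverse(1)[OF assms(2) this] have "M \<notin> Units (ring_mat TYPE(complex) m m)" .
    moreover obtain B where "inverts_mat M B" "inverts_mat B M" using assms(1) unfolding invertible_mat_def by auto
    moreover have "B \<in> carrier_mat m m" using calculation(2,3) assms(2) unfolding inverts_mat_def
      by (metis carrier_matD carrier_matI index_mult_mat(3) index_one_mat(3))
    ultimately show False using assms(2) unfolding inverts_mat_def Units_def ring_mat_def
      by (auto simp: carrier_matD)
  qed
  then obtain B where B: "mat_inverse M = Some B" by auto
  from mat_inverse(2)[OF assms(2) B] B show "M * minv M = 1\<^sub>m m" "minv M * M = 1\<^sub>m m" "minv M \<in> carrier_mat m m"
    unfolding minv_def using assms(2) by auto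
qed

lemma frac_aux: "c + b \<noteq> 0 \<Longrightarrow> c * (X / (c + b)) + X / (c + b) * b = (X::complex)"
proof -
  assume h: "c + b \<noteq> 0"
  have "c * (X / (c + b)) + X / (c + b) * b = X / (c + b) * (c + b)" by (simp add: algebra_simps add_divide_distrib)
  also have "\<dots> = X" using h by simp
  finally show ?thesis .
qed

lemma assoc': "dim_col A = dim_row B \<Longrightarrow> dim_col B = dim_row C \<Longrightarrow> A * B * C = A * (B * (C::'a::semiring_0 mat))"
  by (rule assoc_mult_mat[of A "dim_row A" "dim_col A" B "dim_col B" C "dim_col C"]) auto

lemma mmd: "dim_col A = dim_row B \<Longrightarrow> dim_row C = dim_row B \<Longrightarrow> dim_col C = dim_col B \<Longrightarrow> A * (B - C) = A * B - A * (C::complex mat)"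
  by (rule mult_minus_distrib_mat[of A "dim_row A" "dim_col A" B "dim_col B"]) auto
lemma mpd: "dim_col A = dim_row B \<Longrightarrow> dim_row C = dim_row B \<Longrightarrow> dim_col C = dim_col B \<Longrightarrow> A * (B + C) = A * B + A * (C::complex mat)"
  by (rule mult_add_distrib_mat[of A "dim_row A" "dim_col A" B "dim_col B"]) auto
lemma mdm: "dim_row B = dim_row A \<Longrightarrow> dim_col B = dim_col A \<Longrightarrow> dim_col A = dim_row C \<Longrightarrow> (A - B) * C = A * C - B * (C::complex mat)"
  by (rule minus_mult_distrib_mat[of A "dim_row A" "dim_col A" B C "dim_col C"]) auto
lemma pdm: "dim_row B = dim_row A \<Longrightarrow> dim_col B = dim_col A \<Longrightarrow> dim_col A = dim_row C \<Longrightarrow> (A + B) * C = A * C + B * (C::complex mat)"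
  by (rule add_mult_distrib_mat[of A "dim_row A" "dim_col A" B C "dim_col C"]) auto

lemma mult_entry: "A \<in> carrier_mat m p \<Longrightarrow> B \<in> carrier_mat p q \<Longrightarrow> i < m \<Longrightarrow> j < q \<Longrightarrow>
  (A * B) $$ (i,j) = (\<Sum>l\<in>{0..<p}. A $$ (i,l) * B $$ (l,j))"
  by (simp add: scalar_prod_def)

lemma ifz_mult: "(if P then (a::complex) else 0) * b = (if P then a * b else 0)"
  "b * (if P then (a::complex) else 0) = (if P then b * a else 0)" by auto

lemma diag_mult_left: "M \<in> carrier_mat k p \<Longrightarrow> i < k \<Longrightarrow> j < p \<Longrightarrow>
  (mat k k (\<lambda>(i,j). if i = j then d i else 0) * M) $$ (i,j) = (d i :: complex) * M $$ (i,j)"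
  by (auto simp: scalar_prod_def ifz_mult sum.delta sum.delta')

lemma diag_mult_right: "M \<in> carrier_mat p k \<Longrightarrow> i < p \<Longrightarrow> j < k \<Longrightarrow>
  (M * mat k k (\<lambda>(i,j). if i = j then d i else 0)) $$ (i,j) = M $$ (i,j) * (d j :: complex)"
  by (auto simp: scalar_prod_def ifz_mult sum.delta sum.delta')



theorem proposition6p3:
  fixes n k :: nat
    and A F :: "complex mat" and C :: "complex mat"
    and \<alpha> :: "nat \<Rightarrow> complex"
    and V T X R :: "complex mat"
  assumes A: "A \<in> carrier_mat n n"
    and C: "C \<in> carrier_mat 1 n"
    and F: "F \<in> carrier_mat n n"
    and F_herm: "mat_adjoint F = F"
    and \<alpha>_dist: "inj_on \<alpha> {..<k}"
    and \<alpha>_pos: "\<forall>j<k. Re (\<alpha> j) > 0"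
    and \<alpha>_nonsing: "\<forall>j<k. invertible_mat (- mat_adjoint A + \<alpha> j \<cdot>\<^sub>m 1\<^sub>m n)"
    and V_def: "V = mat n k (\<lambda>(i,j). (minv (- mat_adjoint A + \<alpha> j \<cdot>\<^sub>m 1\<^sub>m n) * mat_adjoint C) $$ (i,0))"
    and T_def: "T = mat k k (\<lambda>(i,j). (1 + (mat_adjoint V * F * V) $$ (i,j)) / (cnj (\<alpha> i) + \<alpha> j))"
    and T_nonsing: "invertible_mat T"
    and X_def: "X = V * minv T * mat_adjoint V"
    and R_def: "R = mat_adjoint C * C + mat_adjoint A * X + X * A - X * F * X"
  shows "R = mat n (k+1) (\<lambda>(i,j). if j = 0 then mat_adjoint C $$ (i,0) else V $$ (i, j-1))
           * mat (k+1) 1 (\<lambda>(i,_). if i = 0 then 1 else - (minv T * mat k 1 (\<lambda>_. 1)) $$ (i-1, 0))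
           * mat 1 (k+1) (\<lambda>(_,j). if j = 0 then 1 else - (mat 1 k (\<lambda>_. 1) * minv T) $$ (0, j-1))
           * mat_adjoint (mat n (k+1) (\<lambda>(i,j). if j = 0 then mat_adjoint C $$ (i,0) else V $$ (i, j-1)))
       \<and> vec_space.rank n R \<le> 1"
  proof -
  define Cs where "Cs = mat_adjoint C"
  define As where "As = mat_adjoint A"
  define Vs where "Vs = mat_adjoint V"
  define Ti where "Ti = minv T"
  define e where "e = (mat k 1 (\<lambda>_. 1) :: complex mat)"
  define e' where "e' = (mat 1 k (\<lambda>_. 1) :: complex mat)"
  define D where "D = mat k k (\<lambda>(i,j). if i = j then \<alpha> i else 0)"
  define Ds where "Ds = mat k k (\<lambda>(i,j). if i = j then cnj (\<alpha> i) else 0)"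
  have Vc: "V \<in> carrier_mat n k" using V_def by auto
  have Tc: "T \<in> carrier_mat k k" using T_def by auto
  have Cs: "Cs \<in> carrier_mat n 1" using C Cs_def by auto
  have As: "As \<in> carrier_mat n n" using A As_def by auto
  have Vs: "Vs \<in> carrier_mat k n" using Vc Vs_def by auto
  have Ti: "Ti \<in> carrier_mat k k" "Ti * T = 1\<^sub>m k" "T * Ti = 1\<^sub>m k"
    using minv[OF T_nonsing Tc] Ti_def by auto
  have e: "e \<in> carrier_mat k 1" "e' \<in> carrier_mat 1 k" using e_def e'_def by auto
  have Dc: "D \<in> carrier_mat k k" "Ds \<in> carrier_mat k k" using D_def Ds_def by auto
  have Dsa: "mat_adjoint D = Ds" unfolding D_def Ds_def by (rule eq_matI) auto
  have ea: "mat_adjoint e' = e" unfolding e_def e'_def by (rule eq_matI) auto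
  have F1: "As * V = V * D - Cs * e'"
  proof (rule eq_matI)
    fix i j assume ij: "i < dim_row (V * D - Cs * e')" "j < dim_col (V * D - Cs * e')"
    hence i: "i < n" and j: "j < k" using Vc Dc Cs e by auto
    define B where "B = - As + \<alpha> j \<cdot>\<^sub>m 1\<^sub>m n"
    have Bc: "B \<in> carrier_mat n n" using B_def As by auto
    have Binv: "invertible_mat B" using \<alpha>_nonsing j B_def As_def by auto
    define w where "w = minv B * Cs"
    have wc: "w \<in> carrier_mat n 1" using w_def minv(3)[OF Binv Bc] Cs by auto
    have "B * w = Cs" unfolding w_def
      using minv[OF Binv Bc] Bc Cs by (simp flip: assoc_mult_mat)
    hence eqw: "- (As * w) + \<alpha> j \<cdot>\<^sub>m w = Cs" unfolding B_def
      using As wc by (simp add: add_mult_distrib_mat[of _ n n] mult_smult_assoc_mat[of _ n n])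
    hence wi: "(As * w) $$ (i,0) = \<alpha> j * w $$ (i,0) - Cs $$ (i,0)"
      using arg_cong[OF eqw, of "\<lambda>M. M $$ (i,0)"] As wc i by auto
    have Vij: "\<And>i. i < n \<Longrightarrow> V $$ (i,j) = w $$ (i,0)" using j unfolding V_def w_def B_def As_def Cs_def by simp
    have colV: "col V j = col w 0" by (rule eq_vecI) (use Vc wc Vij j in auto)
    have "(As * V) $$ (i,j) = (As * w) $$ (i,0)" using As Vc wc i j colV by simp
    also have "\<dots> = (V * D - Cs * e') $$ (i,j)"
      unfolding wi using Vc Cs e i j diag_mult_right[OF Vc i j, of \<alpha>] Vij[OF i]
      by (auto simp: D_def e'_def scalar_prod_def) 
    finally show "(As * V) $$ (i,j) = (V * D - Cs * e') $$ (i,j)" .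
  qed (use As Vc Dc Cs e in auto)
  have F2: "Vs * A = Ds * Vs - e * C"
  proof -
    have "Vs * A = mat_adjoint (As * V)" using adj_mult[OF As Vc] As_def Vs_def by simp
    also have "\<dots> = mat_adjoint (V * D) - mat_adjoint (Cs * e')" unfolding F1
      by (rule adj_minus) (use Vc Dc Cs e in auto)
    also have "\<dots> = Ds * Vs - e * C" using adj_mult[OF Vc Dc(1)] adj_mult[OF Cs e(2)] Dsa ea Vs_def Cs_def by simp
    finally show ?thesis .
  qed
  have F3: "Vs * F * V = Ds * T + T * D - e * e'"
  proof (rule eq_matI)
    fix i j assume ij: "i < dim_row (Ds * T + T * D - e * e')" "j < dim_col (Ds * T + T * D - e * e')"
    hence i: "i < k" and j: "j < k" using Tc Dc e by auto
    have nz: "cnj (\<alpha> i) + \<alpha> j \<noteq> 0"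
    proof
      assume "cnj (\<alpha> i) + \<alpha> j = 0"
      hence "Re (cnj (\<alpha> i) + \<alpha> j) = 0" by simp
      moreover have "Re (\<alpha> i) > 0" "Re (\<alpha> j) > 0" using \<alpha>_pos i j by auto
      ultimately show False by simp
    qed
    have Tij: "T $$ (i,j) = (1 + (Vs * F * V) $$ (i,j)) / (cnj (\<alpha> i) + \<alpha> j)"
      using i j unfolding T_def Vs_def by simp
    have "(Ds * T + T * D - e * e') $$ (i,j) = cnj (\<alpha> i) * T $$ (i,j) + T $$ (i,j) * \<alpha> j - 1"
      using diag_mult_left[OF Tc i j, of "\<lambda>i. cnj (\<alpha> i)"] diag_mult_right[OF Tc i j, of \<alpha>] i j Tc Dc e
      unfolding Ds_def D_def by (simp add: e_def e'_def scalar_prod_def)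
    also have "\<dots> = (Vs * F * V) $$ (i,j)" unfolding Tij using frac_aux[OF nz] by simp
    finally show "(Vs * F * V) $$ (i,j) = (Ds * T + T * D - e * e') $$ (i,j)" by simp
  qed (use Vs F Vc Tc Dc e in auto)
  note cs = Vc Tc Cs C As A Vs Ti(1) e Dc F
  have TiT: "\<And>X p. X \<in> carrier_mat k p \<Longrightarrow> Ti * (T * X) = X"
    using Ti Tc by (simp flip: assoc_mult_mat)
  have G: "Ti * (Vs * F * V) * Ti = Ti * Ds + D * Ti - Ti * e * (e' * Ti)"
  proof -
    have "Ti * (Vs * F * V) * Ti = Ti * (Ds * T + T * D - e * e') * Ti" unfolding F3 ..
    also have "\<dots> = (Ti * (Ds * T) + Ti * (T * D) - Ti * (e * e')) * Ti"
      using cs by (simp add: mult_minus_distrib_mat[of Ti k k _ k] mult_add_distrib_mat[of Ti k k _ k])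
    also have "\<dots> = Ti * (Ds * T) * Ti + Ti * (T * D) * Ti - Ti * (e * e') * Ti"
      using cs by (simp add: minus_mult_distrib_mat[of _ k k _ Ti k] add_mult_distrib_mat[of _ k k _ Ti k])
    also have "\<dots> = Ti * Ds + D * Ti - Ti * e * (e' * Ti)"
    proof -
      have "Ti * (Ds * T) * Ti = Ti * Ds" 
        using assoc_mult_mat[of Ti k k "Ds * T" k Ti k] assoc_mult_mat[of Ds k k T k Ti k] cs Ti by simp
      moreover have "Ti * (T * D) * Ti = D * Ti"
        using assoc_mult_mat[of Ti k k "T * D" k Ti k] assoc_mult_mat[of T k k D k Ti k] cs Ti TiT[of "D * Ti" k] by simp
      moreover have "Ti * (e * e') * Ti = Ti * e * (e' * Ti)"
      proof -
        have "Ti * (e * e') * Ti = Ti * ((e * e') * Ti)" by (rule assoc_mult_mat) (use cs in auto)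
        also have "(e * e') * Ti = e * (e' * Ti)" by (rule assoc_mult_mat) (use cs in auto)
        also have "Ti * (e * (e' * Ti)) = Ti * e * (e' * Ti)" by (rule assoc_mult_mat[symmetric]) (use cs in auto)
        finally show ?thesis .
      qed
      ultimately show ?thesis by simp
    qed
    finally show ?thesis .
  qed
  have dims: "dim_row V = n" "dim_col V = k" "dim_row T = k" "dim_col T = k" "dim_row Cs = n" "dim_col Cs = 1"
    "dim_row C = 1" "dim_col C = n" "dim_row As = n" "dim_col As = n" "dim_row A = n" "dim_col A = n"
    "dim_row Vs = k" "dim_col Vs = n" "dim_row Ti = k" "dim_col Ti = k" "dim_row e = k" "dim_col e = 1"
    "dim_row e' = 1" "dim_col e' = k" "dim_row D = k" "dim_col D = k" "dim_row Ds = k" "dim_col Ds = k"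
    "dim_row F = n" "dim_col F = n" using cs by auto
  have t1: "As * (V * Ti * Vs) = V * D * (Ti * Vs) - Cs * e' * (Ti * Vs)"
  proof -
    have "As * (V * Ti * Vs) = (As * V) * (Ti * Vs)" by (simp add: assoc' dims)
    also have "\<dots> = V * D * (Ti * Vs) - Cs * e' * (Ti * Vs)" unfolding F1
      by (simp add: mdm dims)
    finally show ?thesis .
  qed
  have t2: "V * Ti * Vs * A = V * (Ti * (Ds * Vs)) - V * (Ti * (e * C))"
  proof -
    have "V * Ti * Vs * A = V * (Ti * (Vs * A))" by (simp add: assoc' dims)
    also have "\<dots> = V * (Ti * (Ds * Vs)) - V * (Ti * (e * C))" unfolding F2
      by (simp add: mmd dims)
    finally show ?thesis .
  qed
  have t3: "V * Ti * Vs * F * (V * Ti * Vs) = V * (Ti * Ds * Vs) + V * (D * Ti * Vs) - V * (Ti * e * (e' * Ti) * Vs)"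
  proof -
    have "V * Ti * Vs * F * (V * Ti * Vs) = V * ((Ti * (Vs * F * V) * Ti) * Vs)" by (simp add: assoc' dims)
    also have "\<dots> = V * ((Ti * Ds + D * Ti - Ti * e * (e' * Ti)) * Vs)" unfolding G ..
    also have "\<dots> = V * (Ti * Ds * Vs) + V * (D * Ti * Vs) - V * (Ti * e * (e' * Ti) * Vs)"
      by (simp add: mmd mpd mdm pdm dims)
    finally show ?thesis .
  qed
  have t4: "(Cs - V * (Ti * e)) * (C - e' * Ti * Vs) = Cs * C - Cs * (e' * Ti * Vs) - V * (Ti * e) * C + V * (Ti * e) * (e' * Ti * Vs)"
    by (simp add: mmd mdm dims) (rule eq_matI, auto simp: dims)
  have R1: "R = Cs * C + (V * D * (Ti * Vs) - Cs * e' * (Ti * Vs)) + (V * (Ti * (Ds * Vs)) - V * (Ti * (e * C)))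
     - (V * (Ti * Ds * Vs) + V * (D * Ti * Vs) - V * (Ti * e * (e' * Ti) * Vs))"
    unfolding R_def X_def using t1 t2 t3 by (simp add: Cs_def As_def Vs_def Ti_def)
  have main: "R = (Cs - V * (Ti * e)) * (C - e' * Ti * Vs)"
    unfolding R1 t4 by (simp add: assoc' dims) (rule eq_matI, auto simp: dims)
  define P where "P = mat n (k+1) (\<lambda>(i,j). if j = 0 then mat_adjoint C $$ (i,0) else V $$ (i, j-1))"
  define q where "q = mat (k+1) 1 (\<lambda>(i,_). if i = 0 then 1 else - (minv T * mat k 1 (\<lambda>_. 1)) $$ (i-1, 0))"
  define r where "r = mat 1 (k+1) (\<lambda>(_,j). if j = 0 then 1 else - (mat 1 k (\<lambda>_. 1) * minv T) $$ (0, j-1))"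
  have Pc: "P \<in> carrier_mat n (Suc k)" and qc: "q \<in> carrier_mat (Suc k) 1" and rc: "r \<in> carrier_mat 1 (Suc k)"
    unfolding P_def q_def r_def by auto
  have dimsP: "dim_row P = n" "dim_col P = Suc k" "dim_row q = Suc k" "dim_col q = 1" "dim_row r = 1" "dim_col r = Suc k"
    using Pc qc rc by auto
  have Tie: "Ti * e \<in> carrier_mat k 1" and eTi: "e' * Ti \<in> carrier_mat 1 k" using cs by auto
  have Pq: "P * q = Cs - V * (Ti * e)"
  proof (rule eq_matI)
    fix i j assume "i < dim_row (Cs - V * (Ti * e))" "j < dim_col (Cs - V * (Ti * e))"
    hence i: "i < n" and j: "j = 0" using dims by auto
    have "(P * q) $$ (i,j) = (\<Sum>l\<in>{0..<Suc k}. P $$ (i,l) * q $$ (l,0))"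
      using mult_entry[OF Pc qc i, of 0] j by simp
    also have "\<dots> = P $$ (i,0) * q $$ (0,0) + (\<Sum>l\<in>{0..<k}. P $$ (i,Suc l) * q $$ (Suc l,0))"
      by (simp only: sum.atLeast0_lessThan_Suc_shift o_def)
    also have "\<dots> = Cs $$ (i,0) - (\<Sum>l\<in>{0..<k}. V $$ (i,l) * (Ti * e) $$ (l,0))"
    proof -
      have "P $$ (i,0) * q $$ (0,0) = Cs $$ (i,0)" using i unfolding P_def q_def Cs_def by simp
      moreover have "P $$ (i,Suc l) * q $$ (Suc l,0) = - (V $$ (i,l) * (Ti * e) $$ (l,0))" if "l < k" for l
      proof -
        have "P $$ (i,Suc l) = V $$ (i,l)" using i that unfolding P_def by simp
        moreover have "q $$ (Suc l,0) = - (Ti * e) $$ (l,0)" using that unfolding q_def[folded Ti_def e_def] by simp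
        ultimately show ?thesis by simp
      qed
      hence "(\<Sum>l\<in>{0..<k}. P $$ (i,Suc l) * q $$ (Suc l,0)) = - (\<Sum>l\<in>{0..<k}. V $$ (i,l) * (Ti * e) $$ (l,0))"
        by (simp only: sum_negf[symmetric]) (rule sum.cong, auto)
      ultimately show ?thesis by (simp only: diff_conv_add_uminus)
    qed
    also have "\<dots> = (Cs - V * (Ti * e)) $$ (i,j)"
      using mult_entry[OF Vc Tie i, of 0] index_minus_mat(1)[of i "V * (Ti * e)" 0 Cs] i j dims by simp
    finally show "(P * q) $$ (i,j) = (Cs - V * (Ti * e)) $$ (i,j)" .
  qed (simp_all add: dims dimsP)
  have rP: "r * mat_adjoint P = C - e' * Ti * Vs"
  proof (rule eq_matI)
    fix i j assume "i < dim_row (C - e' * Ti * Vs)" "j < dim_col (C - e' * Ti * Vs)"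
    hence i: "i = 0" and j: "j < n" using dims by auto
    have PaC: "mat_adjoint P \<in> carrier_mat (Suc k) n" using Pc by simp
    have "(r * mat_adjoint P) $$ (i,j) = (\<Sum>l\<in>{0..<Suc k}. r $$ (0,l) * mat_adjoint P $$ (l,j))"
      using mult_entry[OF rc PaC _ j, of 0] i by simp
    also have "\<dots> = (\<Sum>l\<in>{0..<Suc k}. r $$ (0,l) * cnj (P $$ (j,l)))"
      by (rule sum.cong) (use j dimsP in auto)
    also have "\<dots> = r $$ (0,0) * cnj (P $$ (j,0)) + (\<Sum>l\<in>{0..<k}. r $$ (0,Suc l) * cnj (P $$ (j,Suc l)))"
      by (simp only: sum.atLeast0_lessThan_Suc_shift o_def)
    also have "\<dots> = C $$ (0,j) - (\<Sum>l\<in>{0..<k}. (e' * Ti) $$ (0,l) * Vs $$ (l,j))"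
    proof -
      have "r $$ (0,0) * cnj (P $$ (j,0)) = C $$ (0,j)" using j C unfolding P_def r_def by simp
      moreover have "r $$ (0,Suc l) * cnj (P $$ (j,Suc l)) = - ((e' * Ti) $$ (0,l) * Vs $$ (l,j))" if "l < k" for l
      proof -
        have "cnj (P $$ (j,Suc l)) = Vs $$ (l,j)" using j that Vc unfolding P_def Vs_def by simp
        moreover have "r $$ (0,Suc l) = - (e' * Ti) $$ (0,l)" using that unfolding r_def[folded Ti_def e'_def] by simp
        ultimately show ?thesis by simp
      qed
      hence "(\<Sum>l\<in>{0..<k}. r $$ (0,Suc l) * cnj (P $$ (j,Suc l))) = - (\<Sum>l\<in>{0..<k}. (e' * Ti) $$ (0,l) * Vs $$ (l,j))"
        by (simp only: sum_negf[symmetric]) (rule sum.cong, auto)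
      ultimately show ?thesis by (simp only: diff_conv_add_uminus)
    qed
    also have "\<dots> = (C - e' * Ti * Vs) $$ (i,j)"
      using mult_entry[OF eTi Vs _ j, of 0] index_minus_mat(1)[of 0 "e' * Ti * Vs" j C] i j dims by simp
    finally show "(r * mat_adjoint P) $$ (i,j) = (C - e' * Ti * Vs) $$ (i,j)" .
  qed (simp_all add: dims dimsP)
  have eq: "R = P * q * r * mat_adjoint P"
  proof -
    have "P * q * r * mat_adjoint P = (P * q) * (r * mat_adjoint P)"
      by (rule assoc') (simp_all add: dimsP)
    thus ?thesis unfolding Pq rP main by simp
  qed
  have rk: "vec_space.rank n R \<le> 1"
  proof (rule vec_space.rank_le_1_product_entries)
    have U: "Cs - V * (Ti * e) \<in> carrier_mat n 1" using cs by auto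
    have W: "C - e' * Ti * Vs \<in> carrier_mat 1 n" using cs by auto
    show "R \<in> carrier_mat n n" unfolding main using U W by auto
    fix a b assume "a < dim_row R" "b < dim_col R"
    hence a: "a < n" and b: "b < n" using U W unfolding main by auto
    show "R $$ (a,b) = (Cs - V * (Ti * e)) $$ (a,0) * (C - e' * Ti * Vs) $$ (0,b)"
      unfolding main mult_entry[OF U W a b] by simp
  qed
  show ?thesis using eq rk unfolding P_def q_def r_def by (rule conjI)
qed

end
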